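(* Let $a,b>0$ with $a\neq2b$, $\eta\in(0,1]$, $T>0$ and $0<\tau\le T$. For two independent photons each in the double-exponential state $(a,b)$, each detected by a detector of efficiency $\eta$, define the coincidence probability $$p_{\mathrm{ph\text{-}ph}}(T,\tau)=\iint_{|t_1-t_2|\le\tau}p_T(t_1)\,p_T(t_2)\,dt_1\,dt_2 .$$ Then $$p_{\mathrm{ph\text{-}ph}}(T,\tau)\left(\frac{p_{\mathrm{det}}(T)}{\eta}\right)^2=\frac{a^2}{a^2-4b^2}(1-e^{-2b\tau})-\frac{4b^2}{a^2-4b^2}(1-e^{-a\tau})+\frac{a^2}{(a-2b)^2}(1-e^{2b\tau})e^{-4bT}+\frac{4b^2}{(a-2b)^2}(1-e^{a\tau})e^{-2aT}-\frac{4ab}{(a-2b)^2}\left(1-\frac{ae^{2b\tau}+2be^{a\tau}}{a+2b}\right)e^{-(a+2b)T}.$$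
   Context: $\Theta$ is the Heaviside step function. The double-exponential photon state $(a,b)$ is the mixture over emission times $t_0$ with density $p_{\mathrm{em}}(t_0)=ae^{-at_0}\Theta(t_0)$ of pure photons with temporal wave function $\psi_{t_0}(t)=\sqrt{2b}\,e^{-b(t-t_0)}\Theta(t-t_0)$. The detection-time density is $p(t)=\eta\int_0^\infty p_{\mathrm{em}}(t_0)|\psi_{t_0}(t)|^2dt_0$, the probability of detection within the detection time window $[0,T]$ is $p_{\mathrm{det}}(T)=\int_0^Tp(t)\,dt$, and the detection-time density conditioned on detection within $[0,T]$ is $p_T(t)=\Theta(t)\Theta(T-t)p(t)/p_{\mathrm{det}}(T)$. $\tau$ is the coincidence time window. *)

theory Defs
  imports "HOL-Analysis.Analysis"
begin

text \<open>Heaviside step function (value at 0 is immaterial: only enters integrands).\<close>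
definition heaviside :: "real \<Rightarrow> real" where
  "heaviside x = (if 0 \<le> x then 1 else 0)"

definition p_em :: "real \<Rightarrow> real \<Rightarrow> real" where
  "p_em a t0 = a * exp (- a * t0) * heaviside t0"

definition psi :: "real \<Rightarrow> real \<Rightarrow> real \<Rightarrow> real" where
  "psi b t0 t = sqrt (2 * b) * exp (- b * (t - t0)) * heaviside (t - t0)"

definition p_dens :: "real \<Rightarrow> real \<Rightarrow> real \<Rightarrow> real \<Rightarrow> real" where
  "p_dens \<eta> a b t = \<eta> * integral {0..} (\<lambda>t0. p_em a t0 * \<bar>psi b t0 t\<bar>^2)"

definition p_det :: "real \<Rightarrow> real \<Rightarrow> real \<Rightarrow> real \<Rightarrow> real" where
  "p_det \<eta> a b T = integral {0..T} (p_dens \<eta> a b)"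

definition p_T :: "real \<Rightarrow> real \<Rightarrow> real \<Rightarrow> real \<Rightarrow> real \<Rightarrow> real" where
  "p_T \<eta> a b T t = heaviside t * heaviside (T - t) * p_dens \<eta> a b t / p_det \<eta> a b T"

definition p_phph :: "real \<Rightarrow> real \<Rightarrow> real \<Rightarrow> real \<Rightarrow> real \<Rightarrow> real" where
  "p_phph \<eta> a b T \<tau> =
     integral {(t1, t2). \<bar>t1 - t2\<bar> \<le> \<tau>} (\<lambda>(t1, t2). p_T \<eta> a b T t1 * p_T \<eta> a b T t2)"

end

theory Submission
  imports Defs
begin
definition "cA a b = 2*b/(2*b-a)"
definition "cB a b = a/(2*b-a)"
definition "al a b = 2*b^2/(2*b-a)^2"
definition "be a b = 4*a*b^2/((2*b-a)^2*(a+2*b))"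
definition "ga a b = 2*a^2*b/((2*b-a)^2*(a+2*b))"
definition "de a b = a^2/(2*(2*b-a)^2)"
definition ff :: "real\<Rightarrow>real\<Rightarrow>real\<Rightarrow>real" where
 "ff a b t = 2*a*b/(2*b-a) * (exp (- a * t) - exp (- 2 * b * t))"
definition FF :: "real\<Rightarrow>real\<Rightarrow>real\<Rightarrow>real" where
 "FF a b t = 1 - cA a b * exp (- a * t) + cB a b * exp (- 2 * b * t)"
definition HH :: "real\<Rightarrow>real\<Rightarrow>real\<Rightarrow>real\<Rightarrow>real" where
 "HH a b s x = - cA a b * exp (- a * x) + cB a b * exp (- 2 * b * x)
   + al a b * exp (- a * s) * exp (- a * x)^2
   - (be a b * exp (- a * s) + ga a b * exp (- 2 * b * s)) * (exp (- a * x) * exp (- 2 * b * x))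
   + de a b * exp (- 2 * b * s) * exp (- 2 * b * x)^2"

lemma grouping:
  fixes ca cb al be ga de P Q U V Ui Vi :: real
  assumes "U * Ui = 1" "V * Vi = 1"
  defines "H \<equiv> \<lambda>u v A B. - ca * A + cb * B + al * u * A^2 - (be * u + ga * v) * (A * B) + de * v * B^2"
  shows "H Ui Vi (P*U) (Q*V) - H Ui Vi 1 1 + (1 - ca*P + cb*Q) * ((1 - ca*P + cb*Q) - (1 - ca*(P*U) + cb*(Q*V)))
     - (H U V P Q - H U V Ui Vi) =
     (ca - cb) + (be - ga - ca) * Ui + (ga - be + cb) * Vi - ca^2*P^2*U - cb^2*Q^2*V + ca^2*P^2 + cb^2*Q^2
     - 2*ca*cb*P*Q + (ca*cb + ga - be)*P*Q*V + (ca*cb + be - ga)*P*Q*U"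
proof -
  have u: "U \<noteq> 0" "V \<noteq> 0" using assms(1,2) by auto
  have ui: "Ui = 1/U" "Vi = 1/V" using assms(1,2) u by (auto simp: field_simps)
  show ?thesis unfolding H_def ui using u by (simp add: field_simps power2_eq_square)
qed
lemma final_combo:
  fixes ca cb al be ga de P Q U V Ui Vi X1 X2 Y1 Y2 Z a b k :: real
  assumes h1: "ca - cb = X1 - X2" and h2: "be - ga - ca = X2" and h3: "ga - be + cb = - X1"
    and h4: "ca^2 = Y2" and h5: "cb^2 = Y1" and h6: "2*ca*cb = Z" and h7: "ca*cb + ga - be = Z*a/k"
    and h8: "ca*cb + be - ga = Z*(2*b)/k" and k: "k \<noteq> 0"
  shows "(ca - cb) + (be - ga - ca) * Ui + (ga - be + cb) * Vi - ca^2*P^2*U - cb^2*Q^2*V + ca^2*P^2 + cb^2*Q^2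
     - 2*ca*cb*P*Q + (ca*cb + ga - be)*P*Q*V + (ca*cb + be - ga)*P*Q*U
   = X1 * (1 - Vi) - X2 * (1 - Ui) + Y1 * (1 - V) * Q^2 + Y2 * (1 - U) * P^2
     - Z * (1 - (a * V + 2 * b * U) / k) * (P * Q)"
  unfolding h1 h2 h3 h4 h5 h6 h7 h8 using k by (simp add: field_simps)

lemma coeffs:
  fixes a b :: real
  assumes "a > 0" "b > 0" "a \<noteq> 2*b"
  shows "cA a b - cB a b = a^2 / (a^2 - 4 * b^2) - 4 * b^2 / (a^2 - 4 * b^2)"
    "be a b - ga a b - cA a b = 4 * b^2 / (a^2 - 4 * b^2)"
    "ga a b - be a b + cB a b = - (a^2 / (a^2 - 4 * b^2))"
    "cA a b ^2 = 4 * b^2 / (a - 2 * b)^2"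
    "cB a b ^2 = a^2 / (a - 2 * b)^2"
    "2 * cA a b * cB a b = 4 * a * b / (a - 2 * b)^2"
    "cA a b * cB a b + ga a b - be a b = 4 * a * b / (a - 2 * b)^2 * a / (a + 2*b)"
    "cA a b * cB a b + be a b - ga a b = 4 * a * b / (a - 2 * b)^2 * (2*b) / (a + 2*b)"
proof -
  define k where "k = a + 2*b"
  define m where "m = 2*b - a"
  have d: "m \<noteq> 0" "k \<noteq> 0" using assms by (auto simp: k_def m_def)
  have m2: "a^2 - 4*b^2 = - (m*k)" "(a - 2*b)^2 = m^2" "2*b - a = m" "a + 2*b = k"
    by (simp_all add: k_def m_def power2_eq_square algebra_simps)
  show "cA a b - cB a b = a^2 / (a^2 - 4 * b^2) - 4 * b^2 / (a^2 - 4 * b^2)"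
    unfolding cA_def cB_def m2 using d apply (simp add: field_simps power2_eq_square)
    by (simp add: k_def m_def algebra_simps power2_eq_square)
  show "be a b - ga a b - cA a b = 4 * b^2 / (a^2 - 4 * b^2)"
    unfolding be_def ga_def cA_def m2 using d apply (simp add: field_simps power2_eq_square)
    by (simp add: k_def m_def algebra_simps power2_eq_square)
  show "ga a b - be a b + cB a b = - (a^2 / (a^2 - 4 * b^2))"
    unfolding be_def ga_def cB_def m2 using d apply (simp add: field_simps power2_eq_square)
    by (simp add: k_def m_def algebra_simps power2_eq_square)
  show "cA a b ^2 = 4 * b^2 / (a - 2 * b)^2"
    unfolding cA_def m2 using d by (simp add: field_simps power2_eq_square)
  show "cB a b ^2 = a^2 / (a - 2 * b)^2"
    unfolding cB_def m2 using d by (simp add: field_simps power2_eq_square)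
  show "2 * cA a b * cB a b = 4 * a * b / (a - 2 * b)^2"
    unfolding cA_def cB_def m2 using d by (simp add: field_simps power2_eq_square)
  show "cA a b * cB a b + ga a b - be a b = 4 * a * b / (a - 2 * b)^2 * a / (a + 2*b)"
    unfolding be_def ga_def cA_def cB_def m2 using d apply (simp add: field_simps power2_eq_square)
    by (simp add: k_def m_def algebra_simps power2_eq_square)
  show "cA a b * cB a b + be a b - ga a b = 4 * a * b / (a - 2 * b)^2 * (2*b) / (a + 2*b)"
    unfolding be_def ga_def cA_def cB_def m2 using d apply (simp add: field_simps power2_eq_square)
    by (simp add: k_def m_def algebra_simps power2_eq_square)
qed

lemma HH_deriv:
  assumes "a > 0" "b > 0" "a \<noteq> 2*b"
  shows "(HH a b s has_real_derivative ff a b x * FF a b (x + s)) (at x)"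
proof -
  define k where "k = a + 2*b"
  define m where "m = 2*b - a"
  have d: "m \<noteq> 0" "k \<noteq> 0" using assms by (auto simp: k_def m_def)
  have e: "exp (- a * (x + s)) = exp (- a * x) * exp (- a * s)"
    "exp (- 2 * b * (x + s)) = exp (- 2 * b * x) * exp (- 2 * b * s)"
    by (subst exp_add[symmetric]; simp add: algebra_simps)+
  show ?thesis
    unfolding HH_def
    apply (rule derivative_eq_intros refl)+
    unfolding ff_def FF_def e cA_def cB_def al_def be_def ga_def de_def k_def[symmetric] m_def[symmetric]
    using assms d apply (simp add: field_simps power2_eq_square)
    apply (simp add: k_def m_def algebra_simps)
    done
qed

lemma FF_deriv:
  assumes "a > 0" "b > 0" "a \<noteq> 2*b"
  shows "(FF a b has_real_derivative ff a b x) (at x)"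
proof -
  define m where "m = 2*b - a"
  have d: "m \<noteq> 0" using assms by (auto simp: m_def)
  show ?thesis
    unfolding FF_def
    apply (rule derivative_eq_intros refl)+
    unfolding ff_def cA_def cB_def m_def[symmetric]
    using d by (simp add: field_simps)
qed

lemma FF_0: "a \<noteq> 2*b \<Longrightarrow> FF a b 0 = 0"
  unfolding FF_def cA_def cB_def by (simp add: field_simps)

lemma ff_int:
  assumes "a > 0" "b > 0" "a \<noteq> 2*b" "l \<le> u"
  shows "(ff a b has_integral (FF a b u - FF a b l)) {l..u}"
  apply (rule fundamental_theorem_of_calculus[OF assms(4)])
  using FF_deriv[OF assms(1-3)]
  by (metis has_real_derivative_iff_has_vector_derivative has_field_derivative_at_within)

lemma HH_int:
  assumes "a > 0" "b > 0" "a \<noteq> 2*b" "l \<le> u"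
  shows "((\<lambda>x. ff a b x * FF a b (x + s)) has_integral (HH a b s u - HH a b s l)) {l..u}"
  apply (rule fundamental_theorem_of_calculus[OF assms(4)])
  using HH_deriv[OF assms(1-3)]
  by (metis has_real_derivative_iff_has_vector_derivative has_field_derivative_at_within)

lemma ff_pos:
  assumes "a > 0" "b > 0" "a \<noteq> 2*b" "x > 0"
  shows "ff a b x > 0"
proof (cases "a < 2*b")
  case True
  then have "exp (- a * x) > exp (- 2 * b * x)" using assms by simp
  then show ?thesis using True assms unfolding ff_def by (intro mult_pos_pos) auto
next
  case False
  then have F: "a > 2*b" using assms by auto
  then have "exp (- a * x) < exp (- 2 * b * x)" using assms by simp
  then show ?thesis using F assms unfolding ff_def by (intro mult_neg_neg) (auto simp: divide_pos_neg)
qed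

lemma FF_pos:
  assumes "a > 0" "b > 0" "a \<noteq> 2*b" "T > 0"
  shows "FF a b T > 0"
proof -
  obtain z where z: "z > 0" "z < T" "FF a b T - FF a b 0 = (T - 0) * ff a b z"
    using MVT2[of 0 T "FF a b" "ff a b"] FF_deriv[OF assms(1-3)] assms(4) by blast
  then show ?thesis using FF_0[OF assms(3)] ff_pos[OF assms(1-3) z(1)] assms(4) by simp
qed

lemma p_dens_eq:
  assumes "a > 0" "b > 0" "a \<noteq> 2*b"
  shows "p_dens \<eta> a b t = (if 0 \<le> t then \<eta> * ff a b t else 0)"
proof -
  define g where "g = (\<lambda>t0. p_em a t0 * \<bar>psi b t0 t\<bar>^2)"
  define ga where "ga = (\<lambda>t0. 2*a*b*exp (-2*b*t) * exp ((2*b-a)*t0))"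
  have g: "g t0 = (if t0 \<le> t then ga t0 else 0)" if "0 \<le> t0" for t0
  proof (cases "t0 \<le> t")
    case True
    have e1: "\<bar>sqrt (2 * b) * exp (- b * (t - t0))\<bar>^2 = 2 * b * (exp (- b * (t - t0)))^2"
      using assms by (simp add: power_mult_distrib)
    have "exp (- a*t0) * (exp (-b*(t-t0)))^2 = exp (-a*t0 + (-b*(t-t0)) + (-b*(t-t0)))"
      by (simp only: power2_eq_square exp_add mult.assoc)
    also have "\<dots> = exp (-2*b*t + (2*b-a)*t0)" by (simp add: algebra_simps)
    also have "\<dots> = exp (-2*b*t) * exp ((2*b-a)*t0)" by (simp only: exp_add)
    finally have e2: "exp (- a*t0) * (exp (-b*(t-t0)))^2 = exp (-2*b*t) * exp ((2*b-a)*t0)" .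
    have "g t0 = 2*a*b*(exp (- a*t0) * (exp (-b*(t-t0)))^2)" using True that assms
      by (simp add: g_def p_em_def psi_def heaviside_def power_mult_distrib)
    also have "\<dots> = ga t0" unfolding e2 ga_def by simp
    finally show ?thesis using True by simp
  next
    case False
    then show ?thesis unfolding g_def psi_def heaviside_def by simp
  qed
  show ?thesis
  proof (cases "0 \<le> t")
    case False
    have "(g has_integral 0) {0..}"
      by (rule has_integral_eq[OF _ has_integral_0]) (use False g in auto)
    then have "integral {0..} g = 0" by (rule integral_unique)
    then show ?thesis using False unfolding p_dens_def g_def by simp
  next
    case True
    define m where "m = 2*b - a"
    have m: "m \<noteq> 0" using assms by (simp add: m_def)
    define G where "G = (\<lambda>t0. 2*a*b*exp (-2*b*t) * exp (m*t0) / m)"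
    have Gd: "(G has_real_derivative ga x) (at x)" for x
      unfolding G_def ga_def m_def[symmetric]
      apply (rule derivative_eq_intros refl)+
      using m by simp_all
    have "(ga has_integral (G t - G 0)) {0..t}"
      apply (rule fundamental_theorem_of_calculus[OF True])
      using Gd by (metis has_real_derivative_iff_has_vector_derivative has_field_derivative_at_within)
    moreover have "G t - G 0 = ff a b t"
    proof -
      have "exp (-2*b*t) * exp (m*t) = exp (- a * t)"
        by (simp add: m_def flip: exp_add) (simp add: algebra_simps)
      then show ?thesis unfolding G_def ff_def m_def[symmetric] using m
        by (simp add: field_simps)
    qed
    ultimately have "((\<lambda>x. if x \<in> {0..t} then ga x else 0) has_integral ff a b t) {0..}"
      by (subst has_integral_restrict) auto
    then have "(g has_integral ff a b t) {0..}"
      by (rule has_integral_eq[rotated]) (use g in auto)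
    then show ?thesis using True unfolding p_dens_def g_def by (simp add: integral_unique)
  qed
qed

lemma p_det_eq:
  assumes "a > 0" "b > 0" "a \<noteq> 2*b" "T \<ge> 0"
  shows "p_det \<eta> a b T = \<eta> * FF a b T"
proof -
  have "p_det \<eta> a b T = integral {0..T} (\<lambda>t. \<eta> * ff a b t)"
    unfolding p_det_def
    by (rule Henstock_Kurzweil_Integration.integral_cong) (simp add: p_dens_eq[OF assms(1-3)])
  also have "\<dots> = \<eta> * (FF a b T - FF a b 0)"
    using integral_unique[OF ff_int[OF assms]] by simp
  finally show ?thesis using FF_0[OF assms(3)] by simp
qed

lemma ff_cont: "continuous_on S (ff a b)"
  unfolding ff_def by (intro continuous_intros)

lemma FF_cont: "continuous_on S (FF a b)"
  unfolding FF_def by (intro continuous_intros)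

lemma inner_int:
  assumes "a > 0" "b > 0" "a \<noteq> 2*b" "l \<le> u"
  shows "(\<integral>y. indicator {l..u} y *\<^sub>R (c * ff a b y) \<partial>lborel) = c * (FF a b u - FF a b l)"
proof -
  have si: "set_integrable lborel {l..u} (\<lambda>y. c * ff a b y)"
    unfolding set_integrable_def
    by (rule borel_integrable_compact) (auto intro!: continuous_intros ff_cont)
  have "(\<integral>y. indicator {l..u} y *\<^sub>R (c * ff a b y) \<partial>lborel) = integral {l..u} (\<lambda>y. c * ff a b y)"
    using set_borel_integral_eq_integral(2)[OF si] unfolding set_lebesgue_integral_def .
  also have "\<dots> = c * (FF a b u - FF a b l)"
    using integral_unique[OF ff_int[OF assms]] by simp
  finally show ?thesis .
qed

lemma double_int:
  assumes "a > 0" "b > 0" "a \<noteq> 2*b" "0 < \<tau>" "\<tau> \<le> T"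
  defines "K \<equiv> ({0..T} \<times> {0..T}) \<inter> {z::real\<times>real. \<bar>fst z - snd z\<bar> \<le> \<tau>}"
  shows "integral UNIV (\<lambda>z. indicator K z *\<^sub>R (ff a b (fst z) * ff a b (snd z))) =
    HH a b \<tau> (T-\<tau>) - HH a b \<tau> 0 + FF a b T * (FF a b T - FF a b (T-\<tau>))
      - (HH a b (-\<tau>) T - HH a b (-\<tau>) \<tau>)"
proof -
  define F where "F = (\<lambda>z::real\<times>real. indicator K z *\<^sub>R (ff a b (fst z) * ff a b (snd z)))"
  have cK: "compact K" unfolding K_def
    by (intro compact_Int_closed compact_Times compact_Icc closed_Collect_le continuous_intros)
  have intF: "integrable lborel F" unfolding F_def
    by (rule borel_integrable_compact[OF cK]) (intro continuous_intros continuous_on_compose2[OF ff_cont] ; auto)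
  have intF2: "integrable (lborel \<Otimes>\<^sub>M lborel) F" using intF by (simp add: lborel_prod)
  have "integral UNIV F = integral\<^sup>L lborel F" using integral_lborel[OF intF] .
  also have "\<dots> = integral\<^sup>L (lborel \<Otimes>\<^sub>M lborel) F" by (simp add: lborel_prod)
  also have "\<dots> = (\<integral>x. (\<integral>y. F (x, y) \<partial>lborel) \<partial>lborel)"
    using lborel_pair.integral_fst'[OF intF2] by simp
  also have "\<dots> = (\<integral>x. indicator {0..T} x *\<^sub>R (ff a b x * (FF a b (min T (x+\<tau>)) - FF a b (max 0 (x-\<tau>)))) \<partial>lborel)"
  proof (rule Bochner_Integration.integral_cong[OF refl])
    fix x :: real
    show "(\<integral>y. F (x, y) \<partial>lborel) = indicator {0..T} x *\<^sub>R (ff a b x * (FF a b (min T (x+\<tau>)) - FF a b (max 0 (x-\<tau>))))"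
    proof (cases "x \<in> {0..T}")
      case True
      have "(\<integral>y. F (x, y) \<partial>lborel) = (\<integral>y. indicator {max 0 (x-\<tau>)..min T (x+\<tau>)} y *\<^sub>R (ff a b x * ff a b y) \<partial>lborel)"
        by (rule Bochner_Integration.integral_cong[OF refl])
           (use True in \<open>auto simp: F_def K_def indicator_def abs_le_iff\<close>)
      also have "\<dots> = ff a b x * (FF a b (min T (x+\<tau>)) - FF a b (max 0 (x-\<tau>)))"
        by (rule inner_int[OF assms(1-3)]) (use True assms in auto)
      finally show ?thesis using True by simp
    next
      case False
      have "\<And>y. F (x, y) = 0" using False by (auto simp: F_def K_def)
      then have "(\<integral>y. F (x, y) \<partial>lborel) = 0" by simp
      then show ?thesis using False by simp
    qed
  qed
  also have "\<dots> = integral {0..T} (\<lambda>x. ff a b x * (FF a b (min T (x+\<tau>)) - FF a b (max 0 (x-\<tau>))))"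
  proof -
    have si: "set_integrable lborel {0..T} (\<lambda>x. ff a b x * (FF a b (min T (x+\<tau>)) - FF a b (max 0 (x-\<tau>))))"
      unfolding set_integrable_def
      by (rule borel_integrable_compact) (auto intro!: continuous_intros ff_cont continuous_on_compose2[OF FF_cont])
    show ?thesis using set_borel_integral_eq_integral(2)[OF si] unfolding set_lebesgue_integral_def .
  qed
  finally have step1: "integral UNIV F = integral {0..T} (\<lambda>x. ff a b x * (FF a b (min T (x+\<tau>)) - FF a b (max 0 (x-\<tau>))))" .
  define \<phi> where "\<phi> = (\<lambda>x. ff a b x * FF a b (min T (x+\<tau>)))"
  define \<psi> where "\<psi> = (\<lambda>x. ff a b x * FF a b (max 0 (x-\<tau>)))"
  have i\<phi>: "\<phi> integrable_on {0..T}" unfolding \<phi>_def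
    by (rule integrable_continuous_interval) (auto intro!: continuous_intros ff_cont continuous_on_compose2[OF FF_cont])
  have i\<psi>: "\<psi> integrable_on {0..T}" unfolding \<psi>_def
    by (rule integrable_continuous_interval) (auto intro!: continuous_intros ff_cont continuous_on_compose2[OF FF_cont])
  have "integral {0..T} (\<lambda>x. ff a b x * (FF a b (min T (x+\<tau>)) - FF a b (max 0 (x-\<tau>))))
      = integral {0..T} (\<lambda>x. \<phi> x - \<psi> x)"
    by (simp add: \<phi>_def \<psi>_def algebra_simps)
  also have "\<dots> = integral {0..T} \<phi> - integral {0..T} \<psi>" by (rule integral_diff[OF i\<phi> i\<psi>])
  also have "integral {0..T} \<phi> = integral {0..T-\<tau>} \<phi> + integral {T-\<tau>..T} \<phi>"
    using Henstock_Kurzweil_Integration.integral_combine[OF _ _ i\<phi>, of "T-\<tau>"] assms by simp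
  also have "integral {0..T-\<tau>} \<phi> = integral {0..T-\<tau>} (\<lambda>x. ff a b x * FF a b (x + \<tau>))"
    by (rule Henstock_Kurzweil_Integration.integral_cong) (auto simp: \<phi>_def)
  also have "\<dots> = HH a b \<tau> (T-\<tau>) - HH a b \<tau> 0"
    by (rule integral_unique[OF HH_int[OF assms(1-3)]]) (use assms in auto)
  also have "integral {T-\<tau>..T} \<phi> = integral {T-\<tau>..T} (\<lambda>x. ff a b x * FF a b T)"
    by (rule Henstock_Kurzweil_Integration.integral_cong) (auto simp: \<phi>_def)
  also have "\<dots> = FF a b T * (FF a b T - FF a b (T-\<tau>))"
    using integral_unique[OF ff_int[OF assms(1-3), of "T-\<tau>" T]] assms by simp
  also have "integral {0..T} \<psi> = integral {0..\<tau>} \<psi> + integral {\<tau>..T} \<psi>"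
    using Henstock_Kurzweil_Integration.integral_combine[OF _ _ i\<psi>, of "\<tau>"] assms by simp
  also have "integral {0..\<tau>} \<psi> = integral {0..\<tau>} (\<lambda>x. 0)"
    by (rule Henstock_Kurzweil_Integration.integral_cong) (auto simp: \<psi>_def FF_0[OF assms(3)])
  also have "integral {\<tau>..T} \<psi> = integral {\<tau>..T} (\<lambda>x. ff a b x * FF a b (x + - \<tau>))"
    by (rule Henstock_Kurzweil_Integration.integral_cong) (auto simp: \<psi>_def)
  also have "\<dots> = HH a b (-\<tau>) T - HH a b (-\<tau>) \<tau>"
    by (rule integral_unique[OF HH_int[OF assms(1-3)]]) (use assms in auto)
  finally show ?thesis using step1 unfolding F_def by simp
qed

lemma final_identity:
  fixes a b T \<tau> :: real
  assumes "a > 0" "b > 0" "a \<noteq> 2*b"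
  shows "HH a b \<tau> (T-\<tau>) - HH a b \<tau> 0 + FF a b T * (FF a b T - FF a b (T-\<tau>))
      - (HH a b (-\<tau>) T - HH a b (-\<tau>) \<tau>) =
      a^2 / (a^2 - 4 * b^2) * (1 - exp (- 2 * b * \<tau>))
    - 4 * b^2 / (a^2 - 4 * b^2) * (1 - exp (- a * \<tau>))
    + a^2 / (a - 2 * b)^2 * (1 - exp (2 * b * \<tau>)) * exp (- 4 * b * T)
    + 4 * b^2 / (a - 2 * b)^2 * (1 - exp (a * \<tau>)) * exp (- 2 * a * T)
    - 4 * a * b / (a - 2 * b)^2
        * (1 - (a * exp (2 * b * \<tau>) + 2 * b * exp (a * \<tau>)) / (a + 2 * b))
        * exp (- (a + 2 * b) * T)"
proof -
  define P where "P = exp (- a * T)"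
  define Q where "Q = exp (- 2 * b * T)"
  define U where "U = exp (a * \<tau>)"
  define V where "V = exp (2 * b * \<tau>)"
  define Ui where "Ui = exp (- a * \<tau>)"
  define Vi where "Vi = exp (- 2 * b * \<tau>)"
  have UV: "U * Ui = 1" "V * Vi = 1" by (simp_all add: U_def Ui_def V_def Vi_def flip: exp_add)
  have r: "exp (- a * \<tau>) = Ui" "exp (- 2 * b * \<tau>) = Vi"
    "exp (- a * (T - \<tau>)) = P * U" "exp (- 2 * b * (T - \<tau>)) = Q * V"
    "exp (- a * 0) = 1" "exp (- 2 * b * 0) = 1"
    "exp (- a * (- \<tau>)) = U" "exp (- 2 * b * (- \<tau>)) = V"
    "exp (- 4 * b * T) = Q^2" "exp (- 2 * a * T) = P^2" "exp (- (a + 2 * b) * T) = P * Q"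
    "exp (2 * b * \<tau>) = V" "exp (a * \<tau>) = U"
    "exp (- a * T) = P" "exp (- 2 * b * T) = Q"
    unfolding P_def Q_def U_def V_def Ui_def Vi_def
    by (simp_all add: exp_minus field_simps power2_eq_square flip: exp_add exp_diff)
  have k: "a + 2*b \<noteq> 0" using assms by simp
  note G = grouping[where ca="cA a b" and cb="cB a b" and al="al a b" and be="be a b" and ga="ga a b"
     and de="de a b" and P=P and Q=Q and U=U and V=V and Ui=Ui and Vi=Vi, OF UV]
  note C = final_combo[OF coeffs[OF assms] k, where P=P and Q=Q and U=U and V=V and Ui=Ui and Vi=Vi]
  show ?thesis
    unfolding HH_def FF_def r by (rule trans[OF G C])
qed
theorem theorem6:
  fixes a b \<eta> T \<tau> :: real
  assumes "a > 0" and "b > 0" and "a \<noteq> 2 * b"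
    and "0 < \<eta>" and "\<eta> \<le> 1"
    and "T > 0" and "0 < \<tau>" and "\<tau> \<le> T"
  shows "p_phph \<eta> a b T \<tau> * (p_det \<eta> a b T / \<eta>)^2 =
      a^2 / (a^2 - 4 * b^2) * (1 - exp (- 2 * b * \<tau>))
    - 4 * b^2 / (a^2 - 4 * b^2) * (1 - exp (- a * \<tau>))
    + a^2 / (a - 2 * b)^2 * (1 - exp (2 * b * \<tau>)) * exp (- 4 * b * T)
    + 4 * b^2 / (a - 2 * b)^2 * (1 - exp (a * \<tau>)) * exp (- 2 * a * T)
    - 4 * a * b / (a - 2 * b)^2
        * (1 - (a * exp (2 * b * \<tau>) + 2 * b * exp (a * \<tau>)) / (a + 2 * b))
        * exp (- (a + 2 * b) * T)"
proof -
  note ab = assms(1-3)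
  define D where "D = p_det \<eta> a b T"
  have D: "D = \<eta> * FF a b T" unfolding D_def using p_det_eq[OF ab] assms(6) by simp
  have Dnz: "D \<noteq> 0" using D FF_pos[OF ab assms(6)] assms(4) by simp
  define K where "K = ({0..T} \<times> {0..T}) \<inter> {z::real\<times>real. \<bar>fst z - snd z\<bar> \<le> \<tau>}"
  define G where "G = (\<lambda>z. indicator K z *\<^sub>R (ff a b (fst z) * ff a b (snd z)))"
  have pt: "(if z \<in> {(t1, t2). \<bar>t1 - t2\<bar> \<le> \<tau>} then (\<lambda>(t1, t2). p_T \<eta> a b T t1 * p_T \<eta> a b T t2) z else 0)
      = G z * (\<eta>^2 / D^2)" for z
  proof -
    obtain x y where z: "z = (x, y)" by (cases z)
    show ?thesis unfolding z G_def K_def p_T_def D_def[symmetric]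
      by (simp add: heaviside_def p_dens_eq[OF ab] indicator_def power2_eq_square)
  qed
  have "p_phph \<eta> a b T \<tau> = integral UNIV (\<lambda>z. G z * (\<eta>^2 / D^2))"
    unfolding p_phph_def pt[symmetric] by (rule Henstock_Kurzweil_Integration.integral_restrict_UNIV[symmetric])
  also have "\<dots> = integral UNIV G * (\<eta>^2 / D^2)" by simp
  finally have "p_phph \<eta> a b T \<tau> * (p_det \<eta> a b T / \<eta>)^2 = integral UNIV G"
    unfolding D_def[symmetric] using Dnz assms(4) by (simp add: field_simps power2_eq_square)
  also have "\<dots> = HH a b \<tau> (T-\<tau>) - HH a b \<tau> 0 + FF a b T * (FF a b T - FF a b (T-\<tau>))
      - (HH a b (-\<tau>) T - HH a b (-\<tau>) \<tau>)"
    unfolding G_def K_def by (rule double_int[OF ab assms(7,8)])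
  also note final_identity[OF ab, where T=T and \<tau>=\<tau>]
  finally show ?thesis .
qed

end
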